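(* For all integers $k\geq 3$ and $m\geq 1$ there are mutually disjoint combinatorial lines $L_1,\dots,L_m\subseteq[k]^{2m}$ such that the only quasilines $L\subseteq L_1\cup\dots\cup L_m$ are $L_1,\dots,L_m$ themselves.
   Context: A combinatorial line in $[k]^n$ is a set $\{\eta(i)\colon i\in[k]\}$ where, for some partition $[n]=C\cup M$ with $M\neq\emptyset$ and values $u_c\in[k]$ ($c\in C$), $\eta(i)$ has $c$-th coordinate $u_c$ for $c\in C$ and $m$-th coordinate $i$ for $m\in M$. A quasiline in $[k]^n$ is a $k$-element subset $L$ such that for every coordinate the entries of the points of $L$ in that coordinate are either all identical or mutually distinct. *)

theory Defs
  imports "HOL-Library.FuncSet"
begin

definition cube :: "nat \<Rightarrow> nat \<Rightarrow> (nat \<Rightarrow> nat) set" where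
  "cube k n = ({0..<n} \<rightarrow>\<^sub>E {1..k})"

definition comb_line :: "nat \<Rightarrow> nat \<Rightarrow> (nat \<Rightarrow> nat) set \<Rightarrow> bool" where
  "comb_line k n L \<longleftrightarrow>
     (\<exists>M u. M \<subseteq> {0..<n} \<and> M \<noteq> {} \<and> (\<forall>c\<in>{0..<n} - M. u c \<in> {1..k}) \<and>
        L = (\<lambda>i. \<lambda>c\<in>{0..<n}. if c \<in> M then i else u c) ` {1..k})"

definition quasiline :: "nat \<Rightarrow> nat \<Rightarrow> (nat \<Rightarrow> nat) set \<Rightarrow> bool" where
  "quasiline k n L \<longleftrightarrow>
     L \<subseteq> cube k n \<and> card L = k \<and>
     (\<forall>c\<in>{0..<n}. (\<forall>x\<in>L. \<forall>y\<in>L. x c = y c) \<or> inj_on (\<lambda>x. x c) L)"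

end

theory Submission
  imports Defs
begin

definition pt :: "nat \<Rightarrow> nat \<Rightarrow> nat \<Rightarrow> nat \<Rightarrow> nat" where
  "pt m j i = (\<lambda>c\<in>{0..<2*m}. if c \<in> {2*j-2, 2*j-1} then i else (if even c then 1 else 2))"

definition LL :: "nat \<Rightarrow> nat \<Rightarrow> nat \<Rightarrow> (nat \<Rightarrow> nat) set" where
  "LL k m j = pt m j ` {1..k}"

lemma pt_in:
  assumes "j \<in> {1..m}" "x \<in> LL k m j"
  shows "x (2*j-2) = x (2*j-1)"
  using assms unfolding LL_def pt_def by auto

lemma pt_out:
  assumes "j \<in> {1..m}" "b \<in> {1..m}" "b \<noteq> j" "x \<in> LL k m b"
  shows "x (2*j-2) = 1 \<and> x (2*j-1) = 2"
proof -
  obtain i where x: "x = pt m b i" using assms(4) unfolding LL_def by auto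
  have "2*j-2 \<notin> {2*b-2, 2*b-1}" "2*j-1 \<notin> {2*b-2, 2*b-1}" using assms(1-3) by auto
  moreover have "2*j-2 < 2*m" "2*j-1 < 2*m" using assms(1) by auto
  moreover have "even (2*j-2)" "odd (2*j-1)" using assms(1) by auto
  ultimately show ?thesis unfolding x pt_def by auto
qed

lemma disj:
  assumes "a \<in> {1..m}" "b \<in> {1..m}" "a \<noteq> b"
  shows "LL k m a \<inter> LL k m b = {}"
proof (rule ccontr)
  assume "LL k m a \<inter> LL k m b \<noteq> {}"
  then obtain x where "x \<in> LL k m a" "x \<in> LL k m b" by auto
  then have "x (2*a-2) = x (2*a-1)" "x (2*a-2) = 1 \<and> x (2*a-1) = 2"
    using pt_in[OF assms(1)] pt_out[OF assms(1) assms(2) assms(3)[symmetric]] by blast+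
  then show False by linarith
qed

lemma key:
  assumes ql: "quasiline k (2*m) L" and sub: "L \<subseteq> (\<Union>j\<in>{1..m}. LL k m j)"
    and a: "a \<in> {1..m}" and p: "p \<in> L" "p \<in> LL k m a"
    and q: "q \<in> L" "q \<notin> LL k m a" and q': "q' \<in> L" "q' \<notin> LL k m a" and ne: "q \<noteq> q'"
  shows False
proof -
  have out: "x (2*a-2) = 1 \<and> x (2*a-1) = 2" if xL: "x \<in> L" and xn: "x \<notin> LL k m a" for x
  proof -
    obtain b where "b \<in> {1..m}" "x \<in> LL k m b" using sub xL by blast
    moreover have "b \<noteq> a" using xn calculation by auto
    ultimately show ?thesis using pt_out[OF a] by blast
  qed
  have q1: "q (2*a-2) = 1" "q (2*a-1) = 2" using out q by blast+
  have q2: "q' (2*a-2) = 1" "q' (2*a-1) = 2" using out q' by blast+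
  have pp: "p (2*a-2) = p (2*a-1)" using pt_in[OF a p(2)] .
  have c1: "2*a-2 \<in> {0..<2*m}" "2*a-1 \<in> {0..<2*m}" using a by auto
  have nj1: "\<not> inj_on (\<lambda>x. x (2*a-2)) L" using q1 q2 q q' ne by (metis inj_on_def)
  have nj2: "\<not> inj_on (\<lambda>x. x (2*a-1)) L" using q1 q2 q q' ne by (metis inj_on_def)
  have "\<forall>x\<in>L. \<forall>y\<in>L. x (2*a-2) = y (2*a-2)" using ql nj1 c1 unfolding quasiline_def by blast
  then have "p (2*a-2) = 1" using p q q1 by metis
  moreover have "\<forall>x\<in>L. \<forall>y\<in>L. x (2*a-1) = y (2*a-1)" using ql nj2 c1 unfolding quasiline_def by blast
  then have "p (2*a-1) = 2" using p q q1 by metis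
  ultimately show False using pp by simp
qed

theorem lemma4p2:
  fixes k m :: nat
  assumes "k \<ge> 3" and "m \<ge> 1"
  shows "\<exists>Ls :: nat \<Rightarrow> (nat \<Rightarrow> nat) set.
           (\<forall>j\<in>{1..m}. comb_line k (2 * m) (Ls j)) \<and>
           (\<forall>i\<in>{1..m}. \<forall>j\<in>{1..m}. i \<noteq> j \<longrightarrow> Ls i \<inter> Ls j = {}) \<and>
           (\<forall>L. quasiline k (2 * m) L \<and> L \<subseteq> (\<Union>j\<in>{1..m}. Ls j) \<longrightarrow>
                (\<exists>j\<in>{1..m}. L = Ls j))"
proof (intro exI[of _ "LL k m"] conjI ballI impI allI)
  fix j assume j: "j \<in> {1..m}"
  show "comb_line k (2 * m) (LL k m j)"
    unfolding comb_line_def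
    apply (rule exI[of _ "{2*j-2, 2*j-1}"], rule exI[of _ "\<lambda>c. if even c then 1 else 2"])
    using j assms(1) by (auto simp: LL_def pt_def)
next
  fix i j assume "i \<in> {1..m}" "j \<in> {1..m}" "i \<noteq> j"
  then show "LL k m i \<inter> LL k m j = {}" by (rule disj)
next
  fix L assume h: "quasiline k (2 * m) L \<and> L \<subseteq> (\<Union>j\<in>{1..m}. LL k m j)"
  have ql: "quasiline k (2*m) L" and sub: "L \<subseteq> (\<Union>j\<in>{1..m}. LL k m j)" using h by auto
  have cardL: "card L = k" using ql unfolding quasiline_def by auto
  then have fin: "finite L" and "L \<noteq> {}" using assms(1) by (auto intro: card_ge_0_finite)
  then obtain p where p: "p \<in> L" by auto
  then obtain a where a: "a \<in> {1..m}" "p \<in> LL k m a" using sub by auto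
  have LsubA: "L \<subseteq> LL k m a"
  proof
    fix q assume q: "q \<in> L"
    show "q \<in> LL k m a"
    proof (rule ccontr)
      assume qn: "q \<notin> LL k m a"
      obtain b where b: "b \<in> {1..m}" "q \<in> LL k m b" using sub q by auto
      have ab: "a \<noteq> b" using qn b by auto
      have s1: "L - LL k m a \<subseteq> {q}" using key[OF ql sub a(1) p a(2) q qn] by auto
      have s2: "L - LL k m b \<subseteq> {p}"
      proof
        fix x assume x: "x \<in> L - LL k m b"
        have pn: "p \<notin> LL k m b" using disj[OF a(1) b(1) ab] a by auto
        have x1: "x \<in> L" and x2: "x \<notin> LL k m b" using x by auto
        have "x = p" using key[OF ql sub b(1) q b(2) p pn x1 x2] by blast
        then show "x \<in> {p}" by simp
      qed
      have "L \<subseteq> {p, q}"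
      proof
        fix x assume x: "x \<in> L"
        show "x \<in> {p, q}"
        proof (cases "x \<in> LL k m a")
          case True
          then have "x \<notin> LL k m b" using disj[OF a(1) b(1) ab] by auto
          then show ?thesis using s2 x by auto
        qed (use s1 x in auto)
      qed
      then have "card L \<le> card {p, q}" by (intro card_mono) auto
      also have "\<dots> \<le> 2" by (simp add: card_insert_if)
      finally have "card L \<le> 2" .
      then show False using cardL assms(1) by simp
    qed
  qed
  have "finite (LL k m a)" "card (LL k m a) \<le> k" unfolding LL_def
    using card_image_le[of "{1..k}" "pt m a"] by auto
  moreover have "card L \<le> card (LL k m a)" using card_mono[OF _ LsubA] calculation by blast
  ultimately have "L = LL k m a" using card_subset_eq[OF _ LsubA] cardL by linarith
  then show "\<exists>j\<in>{1..m}. L = LL k m j" using a by auto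
qed

end
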